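(* For each $\alpha\in(0,1)$, the zeta probability $Z_\alpha$, defined by $Z_\alpha(0)=0$ and $Z_\alpha(k)=\zeta(1+\alpha)^{-1}k^{-1-\alpha}$ for $k\in\mathbb{N}$, belongs to $\mathcal{A}$.
   Context: $\zeta(s)=\sum_{n\ge1}n^{-s}$ for $s>1$. $\mathbb{P}(\mathbb{Z}^+)$ is the set of functions $F:\mathbb{Z}\to[0,1]$ with $\sum_kF(k)=1$ and $F(k)=0$ for $k<0$; $F^{(n)}$ is the $n$-th convolution power ($(F_1*F_2)(m)=\sum_kF_1(k)F_2(m-k)$). $\mathcal{A}=\{F\in\mathbb{P}(\mathbb{Z}^+):\sup_{n\in\mathbb{N}}n\sum_k|F^{(n)}(k)-F^{(n+1)}(k)|<\infty\}$. *)

theory Defs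
  imports "HOL-Analysis.Analysis"
begin

definition zeta_real :: "real \<Rightarrow> real" where
  "zeta_real s = (\<Sum>n. 1 / (real (Suc n)) powr s)"

definition prob_Zplus :: "(int \<Rightarrow> real) set" where
  "prob_Zplus = {F. (\<forall>k. 0 \<le> F k \<and> F k \<le> 1) \<and> (F has_sum 1) UNIV \<and> (\<forall>k<0. F k = 0)}"

definition conv :: "(int \<Rightarrow> real) \<Rightarrow> (int \<Rightarrow> real) \<Rightarrow> int \<Rightarrow> real" where
  "conv F1 F2 m = (\<Sum>\<^sub>\<infinity>k\<in>UNIV. F1 k * F2 (m - k))"

fun conv_pow :: "(int \<Rightarrow> real) \<Rightarrow> nat \<Rightarrow> int \<Rightarrow> real" where
  "conv_pow F 0 = (\<lambda>k. if k = 0 then 1 else 0)"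
| "conv_pow F (Suc n) = conv F (conv_pow F n)"

definition class_A :: "(int \<Rightarrow> real) set" where
  "class_A = {F \<in> prob_Zplus.
     bdd_above ((\<lambda>n. real n * (\<Sum>\<^sub>\<infinity>k\<in>UNIV. \<bar>conv_pow F n k - conv_pow F (Suc n) k\<bar>)) ` {1..})}"

definition zeta_prob :: "real \<Rightarrow> int \<Rightarrow> real" where
  "zeta_prob \<alpha> k = (if k \<le> 0 then 0 else (1 / zeta_real (1 + \<alpha>)) * real_of_int k powr (-1 - \<alpha>))"

end

theory Submission
  imports Defs "HOL-Computational_Algebra.Formal_Power_Series"
begin

lemma frac_tel: "(x::real)/c + (y - x)/c = y/c"
  by (simp add: add_divide_distrib[symmetric])

lemma frac_tel2: "((y::real) - z)/c + (x - y)/c = (x - z)/c"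
  by (simp add: add_divide_distrib[symmetric])

lemma mvt_powr:
  fixes x r :: real
  assumes "0 < x"
  shows "\<exists>z. x < z \<and> z < x + 1 \<and> (x+1) powr r - x powr r = r * z powr (r - 1)"
proof -
  have "\<exists>z. x < z \<and> z < x + 1 \<and> (x+1) powr r - x powr r = ((x+1) - x) * (r * z powr (r - 1))"
    by (rule MVT2[of x "x+1" "\<lambda>z. z powr r" "\<lambda>z. r * z powr (r-1)"])
       (use assms in \<open>auto intro!: has_real_derivative_powr\<close>)
  then show ?thesis by simp
qed

lemma diff_powr_le:
  fixes x s :: real
  assumes "0 < x" "0 < s"
  shows "x powr (-s) - (x+1) powr (-s) \<le> s * x powr (-s-1)"
proof -
  obtain z where z: "x < z" "z < x + 1" "(x+1) powr (-s) - x powr (-s) = (-s) * z powr (-s - 1)"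
    using mvt_powr[OF assms(1), of "-s"] by auto
  have "z powr (-s-1) \<le> x powr (-s-1)"
    using z assms by (intro powr_mono2') auto
  then have "s * z powr (-s-1) \<le> s * x powr (-s-1)"
    using assms by (intro mult_left_mono) auto
  then show ?thesis using z by linarith
qed

lemma sum_powr_lt1:
  fixes a :: real
  assumes "0 < a" "a < 1"
  shows "(\<Sum>j\<in>{1..N}. real j powr (-a)) \<le> real N powr (1-a) / (1-a)"
proof (induction N)
  case 0
  then show ?case by simp
next
  case (Suc N)
  have step: "real (Suc N) powr (-a) \<le> (real (Suc N) powr (1-a) - real N powr (1-a)) / (1-a)"
  proof (cases "N = 0")
    case True
    then show ?thesis using assms by (simp add: field_simps)
  next
    case False
    then have "0 < real N" by simp
    from mvt_powr[OF this, of "1-a"] obtain z where z: "real N < z" "z < real N + 1"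
      "(real N + 1) powr (1-a) - real N powr (1-a) = (1-a) * z powr (1 - a - 1)" by auto
    have "real (Suc N) powr (-a) \<le> z powr (-a)"
      using z assms \<open>0 < real N\<close> by (intro powr_mono2') auto
    then have m: "real (Suc N) powr (-a) * (1-a) \<le> z powr (-a) * (1-a)"
      using assms by (intro mult_right_mono) auto
    have e: "real (Suc N) powr (1-a) - real N powr (1-a) = z powr (-a) * (1-a)"
      using z(3) by (simp add: add.commute mult.commute)
    have "real (Suc N) powr (-a) * (1-a) \<le> real (Suc N) powr (1-a) - real N powr (1-a)"
      using m e by linarith
    then show ?thesis using assms by (simp add: pos_le_divide_eq)
  qed
  have "(\<Sum>j\<in>{1..Suc N}. real j powr (-a)) = (\<Sum>j\<in>{1..N}. real j powr (-a)) + real (Suc N) powr (-a)"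
    by simp
  also have "\<dots> \<le> real N powr (1-a) / (1-a) + (real (Suc N) powr (1-a) - real N powr (1-a)) / (1-a)"
    using Suc step by linarith
  also have "\<dots> = real (Suc N) powr (1-a) / (1-a)" by (rule frac_tel)
  finally show ?case .
qed

lemma sum_powr_gt1_aux:
  fixes s :: real
  assumes "1 < s" "1 \<le> N" "N \<le> L"
  shows "(\<Sum>m\<in>{N<..L}. real m powr (-s)) \<le> (real N powr (1-s) - real L powr (1-s)) / (s-1)"
  using assms(3)
proof (induction L)
  case 0
  then show ?case using assms by simp
next
  case (Suc L)
  show ?case
  proof (cases "N = Suc L")
    case True
    then show ?thesis by simp
  next
    case False
    then have NL: "N \<le> L" using Suc by simp
    then have "0 < real L" using assms by simp
    from mvt_powr[OF this, of "1-s"] obtain z where z: "real L < z" "z < real L + 1"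
      "(real L + 1) powr (1-s) - real L powr (1-s) = (1-s) * z powr (1 - s - 1)" by auto
    have "real (Suc L) powr (-s) \<le> z powr (-s)"
      using z assms \<open>0 < real L\<close> by (intro powr_mono2') auto
    then have m: "real (Suc L) powr (-s) * (s-1) \<le> z powr (-s) * (s-1)"
      using assms by (intro mult_right_mono) auto
    have e: "real L powr (1-s) - real (Suc L) powr (1-s) = z powr (-s) * (s-1)"
      using z(3) by (simp add: add.commute algebra_simps)
    have "real (Suc L) powr (-s) * (s-1) \<le> real L powr (1-s) - real (Suc L) powr (1-s)"
      using m e by linarith
    then have step: "real (Suc L) powr (-s) \<le> (real L powr (1-s) - real (Suc L) powr (1-s)) / (s-1)"
      using assms by (simp add: pos_le_divide_eq)
    have "{N<..Suc L} = insert (Suc L) {N<..L}" using NL by auto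
    then have "(\<Sum>m\<in>{N<..Suc L}. real m powr (-s)) = real (Suc L) powr (-s) + (\<Sum>m\<in>{N<..L}. real m powr (-s))"
      by simp
    also have "\<dots> \<le> (real L powr (1-s) - real (Suc L) powr (1-s)) / (s-1) + (real N powr (1-s) - real L powr (1-s)) / (s-1)"
      using Suc.IH[OF NL] step by linarith
    also have "\<dots> = (real N powr (1-s) - real (Suc L) powr (1-s)) / (s-1)" by (rule frac_tel2)
    finally show ?thesis .
  qed
qed

lemma sum_powr_gt1:
  fixes s :: real
  assumes "1 < s" "1 \<le> N"
  shows "(\<Sum>m\<in>{N<..L}. real m powr (-s)) \<le> real N powr (1-s) / (s-1)"
proof (cases "N \<le> L")
  case True
  have "(\<Sum>m\<in>{N<..L}. real m powr (-s)) \<le> (real N powr (1-s) - real L powr (1-s)) / (s-1)"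
    by (rule sum_powr_gt1_aux[OF assms True])
  also have "\<dots> \<le> real N powr (1-s) / (s-1)" using assms by (simp add: divide_right_mono)
  finally show ?thesis .
next
  case False
  then show ?thesis using assms by simp
qed

lemma exp_le_powr:
  fixes y p :: real
  assumes "0 < y" "0 < p"
  shows "exp (-y) \<le> (p / y) powr p"
proof -
  have "y / p \<le> exp (y / p)" using exp_ge_add_one_self[of "y/p"] by linarith
  then have "(y/p) powr p \<le> exp (y/p) powr p" using assms by (intro powr_mono2) auto
  also have "exp (y/p) powr p = exp y" using assms by (simp add: powr_def)
  finally have 1: "(y/p) powr p \<le> exp y" .
  have "0 < (y/p) powr p" using assms by simp
  then have "exp (-y) \<le> 1 / (y/p) powr p" using 1 by (simp add: exp_minus field_simps)
  also have "1 / (y/p) powr p = (p/y) powr p" using assms by (simp add: powr_divide)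
  finally show ?thesis .
qed

definition nk :: "nat \<Rightarrow> real fps \<Rightarrow> real" where
  "nk K a = (\<Sum>k\<le>K. \<bar>fps_nth a k\<bar>)"

lemma nk_nonneg: "0 \<le> nk K a" unfolding nk_def by (simp add: sum_nonneg)

lemma nk_add: "nk K (a + b) \<le> nk K a + nk K b"
  unfolding nk_def sum.distrib[symmetric] by (intro sum_mono) (simp add: abs_triangle_ineq)

lemma nk_diff: "nk K (a - b) \<le> nk K a + nk K b"
  unfolding nk_def sum.distrib[symmetric] by (intro sum_mono) (simp add: abs_triangle_ineq4)

lemma nk_minus: "nk K (- a) = nk K a" unfolding nk_def by simp

lemma nk_zero: "nk K 0 = 0" unfolding nk_def by simp

lemma nk_const_mult: "nk K (fps_const c * a) = \<bar>c\<bar> * nk K a"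
  unfolding nk_def by (simp add: abs_mult sum_distrib_left)

lemma nk_sum: "nk K (sum g S) \<le> (\<Sum>i\<in>S. nk K (g i))"
proof (induction S rule: infinite_finite_induct)
  case (infinite S) then show ?case by (simp add: nk_zero)
next
  case empty then show ?case by (simp add: nk_zero)
next
  case (insert x F)
  then show ?case using nk_add[of K "g x" "sum g F"] by simp
qed

lemma nk_mult: "nk K (a * b) \<le> nk K a * nk K b"
proof -
  have "nk K (a*b) = (\<Sum>m\<le>K. \<bar>\<Sum>i=0..m. fps_nth a i * fps_nth b (m - i)\<bar>)"
    unfolding nk_def fps_mult_nth ..
  also have "\<dots> \<le> (\<Sum>m\<le>K. \<Sum>i\<le>m. \<bar>fps_nth a i\<bar> * \<bar>fps_nth b (m - i)\<bar>)"
  proof (intro sum_mono)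
    fix m
    have "\<bar>\<Sum>i=0..m. fps_nth a i * fps_nth b (m - i)\<bar> \<le> (\<Sum>i=0..m. \<bar>fps_nth a i * fps_nth b (m - i)\<bar>)"
      by (rule sum_abs)
    then show "\<bar>\<Sum>i=0..m. fps_nth a i * fps_nth b (m - i)\<bar> \<le> (\<Sum>i\<le>m. \<bar>fps_nth a i\<bar> * \<bar>fps_nth b (m - i)\<bar>)"
      by (simp add: atLeast0AtMost abs_mult)
  qed
  also have "\<dots> = (\<Sum>(i,j)\<in>{(i,j). i+j \<le> K}. \<bar>fps_nth a i\<bar> * \<bar>fps_nth b j\<bar>)"
    by (rule sum.triangle_reindex_eq[symmetric])
  also have "\<dots> \<le> (\<Sum>(i,j)\<in>{..K}\<times>{..K}. \<bar>fps_nth a i\<bar> * \<bar>fps_nth b j\<bar>)"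
    by (rule sum_mono2) auto
  also have "\<dots> = nk K a * nk K b"
    unfolding nk_def by (simp add: sum_product sum.cartesian_product)
  finally show ?thesis .
qed

lemma nk_one: "nk K 1 = 1"
proof -
  have "nk K 1 = (\<Sum>k\<in>{..K}. if k = 0 then 1 else 0)"
    unfolding nk_def by (rule sum.cong) auto
  then show ?thesis by simp
qed

lemma nk_pow: "nk K (a ^ n) \<le> (nk K a) ^ n"
proof (induction n)
  case 0 then show ?case by (simp add: nk_one)
next
  case (Suc n)
  have "nk K (a ^ Suc n) \<le> nk K a * nk K (a^n)" by (simp add: nk_mult)
  also have "\<dots> \<le> nk K a * nk K a ^ n" using Suc nk_nonneg by (intro mult_left_mono) auto
  finally show ?case by simp
qed

lemma nk_X_pow: "nk K (fps_X ^ i) \<le> 1"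
proof -
  have "nk K (fps_X ^ i) = (\<Sum>k\<in>{..K}. if k = i then 1 else 0)"
    unfolding nk_def by (rule sum.cong) auto
  then show ?thesis by simp
qed

lemma nk_cong:
  assumes "\<And>k. k \<le> K \<Longrightarrow> fps_nth a k = fps_nth b k"
  shows "nk K a = nk K b"
  unfolding nk_def using assms by (intro sum.cong) auto

lemma cong_mult:
  fixes a b c :: "real fps"
  assumes "\<And>k. k \<le> K \<Longrightarrow> fps_nth a k = fps_nth b k" "k \<le> K"
  shows "fps_nth (a * c) k = fps_nth (b * c) k"
  unfolding fps_mult_nth using assms by (intro sum.cong) auto

lemma cong_mult':
  fixes a b c :: "real fps"
  assumes "\<And>k. k \<le> K \<Longrightarrow> fps_nth a k = fps_nth b k" "k \<le> K"
  shows "fps_nth (c * a) k = fps_nth (c * b) k"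
  unfolding mult.commute[of c] by (rule cong_mult[OF assms])

lemma cong_pow:
  fixes a b :: "real fps"
  assumes "\<And>k. k \<le> K \<Longrightarrow> fps_nth a k = fps_nth b k" "k \<le> K"
  shows "fps_nth (a ^ n) k = fps_nth (b ^ n) k"
  using assms(2)
proof (induction n arbitrary: k)
  case 0 then show ?case by simp
next
  case (Suc n)
  have "fps_nth (a * a^n) k = fps_nth (b * a^n) k" by (rule cong_mult[OF assms(1) Suc.prems])
  also have "\<dots> = fps_nth (b * b^n) k" by (rule cong_mult'[OF Suc.IH Suc.prems])
  finally show ?case by simp
qed

lemma nk_high: "nk K (fps_X ^ Suc K * g) = 0"
proof -
  have "\<And>k. k \<le> K \<Longrightarrow> fps_nth (fps_X ^ Suc K * g) k = 0"
    by (subst fps_X_power_mult_nth) simp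
  then show ?thesis unfolding nk_def by simp
qed

definition S :: "nat \<Rightarrow> real fps" where
  "S m = (\<Sum>i\<in>{1..m}. fps_X ^ i)"

lemma nk_S: "nk K (S m) \<le> real m"
proof -
  have "nk K (S m) \<le> (\<Sum>i\<in>{1..m}. nk K (fps_X ^ i))" unfolding S_def by (rule nk_sum)
  also have "\<dots> \<le> (\<Sum>i\<in>{1..m}. 1)" by (intro sum_mono nk_X_pow)
  finally show ?thesis by simp
qed

lemma DS: "(1 - fps_X) * S m = fps_X - fps_X ^ Suc m"
proof (induction m)
  case 0 then show ?case by (simp add: S_def)
next
  case (Suc m)
  have "S (Suc m) = S m + fps_X ^ Suc m" by (simp add: S_def)
  then have "(1 - fps_X) * S (Suc m) = (1 - fps_X) * S m + (1 - fps_X) * fps_X ^ Suc m"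
    by (simp only: distrib_left)
  also have "\<dots> = (fps_X - fps_X ^ Suc m) + (fps_X ^ Suc m - fps_X ^ Suc (Suc m))"
    unfolding Suc.IH by (simp only: left_diff_distrib mult_1_left power_Suc[of fps_X "Suc m"])
  also have "\<dots> = fps_X - fps_X ^ Suc (Suc m)" by simp
  finally show ?case .
qed

lemma nk_DS: "nk K ((1 - fps_X) * S m) \<le> 2"
proof -
  have "nk K ((1 - fps_X) * S m) \<le> nk K (fps_X ^ 1) + nk K (fps_X ^ Suc m)"
    unfolding DS using nk_diff[of K "fps_X ^ 1" "fps_X ^ Suc m"] by simp
  also have "\<dots> \<le> 1 + 1" by (intro add_mono nk_X_pow)
  finally show ?thesis by simp
qed

lemma geom_fps: "(\<Sum>i<j. (fps_X::real fps) ^ i) * (1 - fps_X) = 1 - fps_X ^ j"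
proof (induction j)
  case 0 then show ?case by simp
next
  case (Suc j)
  have "(\<Sum>i<Suc j. (fps_X::real fps) ^ i) * (1 - fps_X) = (\<Sum>i<j. (fps_X::real fps) ^ i) * (1 - fps_X) + fps_X ^ j * (1 - fps_X)"
    by (simp only: sum.lessThan_Suc distrib_right)
  also have "\<dots> = (1 - fps_X ^ j) + (fps_X ^ j - fps_X ^ Suc j)"
    unfolding Suc.IH by (simp only: right_diff_distrib mult_1_right power_Suc2)
  also have "\<dots> = 1 - fps_X ^ Suc j" by simp
  finally show ?case .
qed

lemma nk_geom: "nk K (\<Sum>i<j. (fps_X::real fps) ^ i) \<le> real j"
proof -
  have "nk K (\<Sum>i<j. (fps_X::real fps) ^ i) \<le> (\<Sum>i<j. nk K (fps_X ^ i))" by (rule nk_sum)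
  also have "\<dots> \<le> (\<Sum>i<j. 1)" by (intro sum_mono nk_X_pow)
  finally show ?thesis by simp
qed

locale zp =
  fixes \<alpha> :: real
  assumes a0: "0 < \<alpha>" and a1: "\<alpha> < 1"
begin

definition c :: real where "c = 1 / zeta_real (1 + \<alpha>)"
definition f :: "nat \<Rightarrow> real" where "f m = (if m = 0 then 0 else c * real m powr (-1-\<alpha>))"
definition FF :: "real fps" where "FF = Abs_fps f"
definition z :: "nat \<Rightarrow> real" where "z n = 1 / real (Suc n) powr (1 + \<alpha>)"

lemma powr_conv: "x powr (-1-\<alpha>) = x powr (-(1+\<alpha>))"
  by (rule arg_cong[where f="\<lambda>t. x powr t"]) simp

lemma pm: "x powr (-1-\<alpha>) = 1 / x powr (1+\<alpha>)"
  unfolding powr_conv by (rule powr_minus_divide)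

lemma summ: "summable z"
proof -
  have "summable (\<lambda>n. real n powr (-(1+\<alpha>)))" using a0 by (subst summable_real_powr_iff) simp
  then have "summable (\<lambda>n. real (Suc n) powr (-(1+\<alpha>)))" by (subst summable_Suc_iff)
  then show ?thesis unfolding z_def by (simp add: pm)
qed

lemma z_nonneg: "0 \<le> z n" by (simp add: z_def)

lemma zeta_eq: "zeta_real (1+\<alpha>) = suminf z"
  unfolding zeta_real_def z_def ..

lemma zeta_ge1: "1 \<le> zeta_real (1+\<alpha>)"
proof -
  have "sum z {..<1} \<le> suminf z"
    by (rule sum_le_suminf[OF summ]) (auto simp: z_nonneg)
  then show ?thesis unfolding zeta_eq by (simp add: z_def)
qed

lemma c_pos: "0 < c" using zeta_ge1 by (simp add: c_def)
lemma c_le1: "c \<le> 1" using zeta_ge1 by (simp add: c_def)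
lemma c_zeta: "c * suminf z = 1" using zeta_ge1 by (simp add: c_def zeta_eq)

lemma f_nonneg: "0 \<le> f m" using c_pos by (simp add: f_def)

lemma f_Suc: "f (Suc n) = c * z n"
proof -
  have "real (Suc n) powr (-1-\<alpha>) = real (Suc n) powr (-(1+\<alpha>))" by (rule powr_conv)
  also have "\<dots> = 1 / real (Suc n) powr (1+\<alpha>)" by (rule powr_minus_divide)
  finally show ?thesis by (simp add: f_def z_def)
qed

lemma f_pos_eq: "1 \<le> m \<Longrightarrow> f m = c * real m powr (-1-\<alpha>)"
  by (simp add: f_def)

lemma sum_f: "(\<Sum>m\<in>{1..N}. f m) = c * sum z {..<N}"
proof -
  have "(\<Sum>m\<in>{1..N}. f m) = (\<Sum>n<N. f (Suc n))" by (rule sum_bounds_lt_plus1[symmetric])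
  also have "\<dots> = c * sum z {..<N}" by (simp add: f_Suc sum_distrib_left)
  finally show ?thesis .
qed

lemma partial: "(\<Sum>m\<in>{1..N}. f m) \<le> 1"
proof -
  have "sum z {..<N} \<le> suminf z"
    by (rule sum_le_suminf[OF summ]) (auto simp: z_nonneg)
  then have "c * sum z {..<N} \<le> c * suminf z" using c_pos by (intro mult_left_mono) auto
  then show ?thesis using c_zeta sum_f by simp
qed

lemma sums1: "(\<lambda>n. f (Suc n)) sums 1"
proof -
  have "(\<lambda>n. c * z n) sums (c * suminf z)" by (rule sums_mult[OF summable_sums[OF summ]])
  then show ?thesis by (simp add: f_Suc c_zeta)
qed

lemma tail_z: "1 \<le> K \<Longrightarrow> suminf (\<lambda>n. z (n + K)) \<le> real K powr (-\<alpha>) / \<alpha>"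
proof -
  assume K: "1 \<le> K"
  have sm: "summable (\<lambda>n. z (n + K))" by (rule summable_ignore_initial_segment[OF summ])
  show ?thesis
  proof (rule suminf_le_const[OF sm])
    fix L
    have "(\<Sum>n<L. z (n + K)) = (\<Sum>n\<in>{0..<L}. (\<lambda>m. real m powr (-(1+\<alpha>))) (n + Suc K))"
      by (intro sum.cong) (auto simp: z_def pm)
    also have "\<dots> = (\<Sum>m\<in>{0 + Suc K..<L + Suc K}. real m powr (-(1+\<alpha>)))"
      by (rule sum.shift_bounds_nat_ivl[symmetric])
    also have "{0 + Suc K..<L + Suc K} = {K<..K+L}" by auto
    also have "(\<Sum>m\<in>{K<..K+L}. real m powr (-(1+\<alpha>))) \<le> real K powr (1 - (1+\<alpha>)) / ((1+\<alpha>) - 1)"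
      by (rule sum_powr_gt1) (use a0 K in auto)
    also have "\<dots> = real K powr (-\<alpha>) / \<alpha>" by simp
    finally show "(\<Sum>n<L. z (n + K)) \<le> real K powr (-\<alpha>) / \<alpha>" .
  qed
qed

lemma tail: "1 \<le> K \<Longrightarrow> 1 - (\<Sum>m\<in>{1..K}. f m) \<le> c * real K powr (-\<alpha>) / \<alpha>"
proof -
  assume K: "1 \<le> K"
  have "1 - (\<Sum>m\<in>{1..K}. f m) = c * (suminf z - sum z {..<K})"
    using c_zeta sum_f by (simp add: right_diff_distrib)
  also have "suminf z - sum z {..<K} = suminf (\<lambda>n. z (n + K))"
    using suminf_split_initial_segment[OF summ, of K] by simp
  also have "c * suminf (\<lambda>n. z (n + K)) \<le> c * (real K powr (-\<alpha>) / \<alpha>)"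
    using tail_z[OF K] c_pos by (intro mult_left_mono) auto
  finally show ?thesis by simp
qed

lemma tail_nonneg: "0 \<le> 1 - (\<Sum>m\<in>{1..K}. f m)" using partial[of K] by simp

lemma F_nat: "zeta_prob \<alpha> (int m) = f m"
  unfolding zeta_prob_def f_def c_def by simp

lemma F_nonpos: "k \<le> 0 \<Longrightarrow> zeta_prob \<alpha> k = 0" by (simp add: zeta_prob_def)

lemma FF_nth: "fps_nth FF m = f m" by (simp add: FF_def)

lemma link: "(\<forall>m. conv_pow (zeta_prob \<alpha>) n (int m) = fps_nth (FF^n) m) \<and> (\<forall>k<0. conv_pow (zeta_prob \<alpha>) n k = 0)"
proof (induction n)
  case 0 show ?case by simp
next
  case (Suc n)
  let ?F = "zeta_prob \<alpha>"
  let ?G = "conv_pow ?F n"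
  have G0: "\<And>k. k < 0 \<Longrightarrow> ?G k = 0" using Suc.IH by blast
  have Gm: "\<And>m. ?G (int m) = fps_nth (FF^n) m" using Suc.IH by blast
  have neg: "conv ?F ?G k = 0" if "k < 0" for k
  proof -
    have "(\<lambda>j. ?F j * ?G (k - j)) = (\<lambda>j. 0)"
    proof
      fix j show "?F j * ?G (k - j) = 0"
      proof (cases "j \<le> 0")
        case True then show ?thesis by (simp add: F_nonpos)
      next
        case False then have "k - j < 0" using that by simp
        then show ?thesis by (simp add: G0)
      qed
    qed
    then show ?thesis unfolding conv_def by simp
  qed
  have pos: "conv ?F ?G (int m) = fps_nth (FF^Suc n) m" for m
  proof -
    have out: "?F j * ?G (int m - j) = 0" if "j \<notin> {0..int m}" for j
    proof (cases "j < 0")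
      case True then show ?thesis by (simp add: F_nonpos)
    next
      case False then have "int m - j < 0" using that by simp
      then show ?thesis by (simp add: G0)
    qed
    have "conv ?F ?G (int m) = infsum (\<lambda>j. ?F j * ?G (int m - j)) {0..int m}"
      unfolding conv_def by (rule infsum_cong_neutral) (use out in auto)
    also have "\<dots> = (\<Sum>j\<in>{0..int m}. ?F j * ?G (int m - j))" by simp
    also have "\<dots> = (\<Sum>j\<in>int ` {0..m}. ?F j * ?G (int m - j))" by (simp add: image_int_atLeastAtMost)
    also have "\<dots> = (\<Sum>i\<in>{0..m}. ?F (int i) * ?G (int m - int i))" by (simp add: sum.reindex)
    also have "\<dots> = (\<Sum>i=0..m. fps_nth FF i * fps_nth (FF^n) (m - i))"
    proof (intro sum.cong refl)
      fix i assume "i \<in> {0..m}"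
      then have e: "int m - int i = int (m - i)" by simp
      show "?F (int i) * ?G (int m - int i) = fps_nth FF i * fps_nth (FF^n) (m - i)"
        unfolding e by (simp only: F_nat FF_nth Gm)
    qed
    also have "\<dots> = fps_nth (FF * FF^n) m" by (simp add: fps_mult_nth)
    finally show ?thesis by simp
  qed
  show ?case using neg pos by simp
qed

lemma link_nat: "conv_pow (zeta_prob \<alpha>) n (int m) = fps_nth (FF^n) m" using link by blast
lemma link_neg: "k < 0 \<Longrightarrow> conv_pow (zeta_prob \<alpha>) n k = 0" using link by blast

end

lemma S_Suc: "S (Suc m) = S m + fps_X ^ Suc m" by (simp add: S_def)

lemma S_identity:
  fixes g :: "nat \<Rightarrow> real"
  assumes "1 \<le> M"
  shows "(\<Sum>i\<in>{1..<M}. fps_const (g i - g (Suc i)) * S i) + fps_const (g M) * S M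
         = (\<Sum>i\<in>{1..M}. fps_const (g i) * fps_X ^ i)"
  using assms
proof (induction M rule: nat_induct_at_least)
  case base
  show ?case by (simp add: S_def)
next
  case (Suc M)
  have alg: "fps_const (g M - g (Suc M)) * S M + fps_const (g (Suc M)) * S (Suc M)
     = fps_const (g M) * S M + fps_const (g (Suc M)) * fps_X ^ Suc M"
  proof -
    have h: "fps_const (g M - g (Suc M)) * S M + fps_const (g (Suc M)) * S M = fps_const (g M) * S M"
      by (simp flip: distrib_right)
    have "fps_const (g M - g (Suc M)) * S M + fps_const (g (Suc M)) * S (Suc M)
       = (fps_const (g M - g (Suc M)) * S M + fps_const (g (Suc M)) * S M) + fps_const (g (Suc M)) * fps_X ^ Suc M"
      unfolding S_Suc by (simp only: distrib_left add.assoc)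
    then show ?thesis unfolding h .
  qed
  have "(\<Sum>i\<in>{1..<Suc M}. fps_const (g i - g (Suc i)) * S i) + fps_const (g (Suc M)) * S (Suc M)
      = (\<Sum>i\<in>{1..<M}. fps_const (g i - g (Suc i)) * S i) + (fps_const (g M - g (Suc M)) * S M + fps_const (g (Suc M)) * S (Suc M))"
    using Suc.hyps by (simp add: sum.atLeastLessThan_Suc add.assoc)
  also have "\<dots> = ((\<Sum>i\<in>{1..<M}. fps_const (g i - g (Suc i)) * S i) + fps_const (g M) * S M) + fps_const (g (Suc M)) * fps_X ^ Suc M"
    unfolding alg by (simp add: add.assoc)
  also have "\<dots> = (\<Sum>i\<in>{1..Suc M}. fps_const (g i) * fps_X ^ i)"
    unfolding Suc.IH using Suc.hyps by simp
  finally show ?case .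
qed

lemma coeff_poly:
  fixes g :: "nat \<Rightarrow> real"
  assumes k: "k \<le> M" and g0: "g 0 = 0"
  shows "fps_nth (\<Sum>i\<in>{1..M}. fps_const (g i) * fps_X ^ i) k = g k"
proof -
  have "fps_nth (\<Sum>i\<in>{1..M}. fps_const (g i) * fps_X ^ i) k = (\<Sum>i\<in>{1..M}. if i = k then g k else 0)"
    unfolding fps_sum_nth by (intro sum.cong) auto
  also have "\<dots> = (if k \<in> {1..M} then g k else 0)" by simp
  also have "\<dots> = g k" using k g0 by (cases "k = 0") auto
  finally show ?thesis .
qed

lemma nk_powdiff:
  assumes "nk K x \<le> q" "nk K y \<le> q"
  shows "nk K ((1 - fps_X) * (x^n - y^n)) \<le> nk K ((1 - fps_X) * (x - y)) * (real n * q^(n-1))"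
proof -
  have q0: "0 \<le> q" using assms(1) nk_nonneg order_trans by blast
  have e: "(1 - fps_X) * (x^n - y^n) = ((1 - fps_X) * (x - y)) * (\<Sum>i<n. y^(n - Suc i) * x^i)"
    by (simp only: power_diff_sumr2 mult.assoc)
  have "nk K (\<Sum>i<n. y^(n - Suc i) * x^i) \<le> (\<Sum>i<n. nk K (y^(n - Suc i) * x^i))" by (rule nk_sum)
  also have "\<dots> \<le> (\<Sum>i<n. q^(n - 1))"
  proof (intro sum_mono)
    fix i assume "i \<in> {..<n}"
    then have ni: "n - Suc i + i = n - 1" by auto
    have "nk K (y^(n - Suc i) * x^i) \<le> nk K (y^(n - Suc i)) * nk K (x^i)" by (rule nk_mult)
    also have "\<dots> \<le> nk K y ^ (n - Suc i) * nk K x ^ i"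
      by (intro mult_mono nk_pow nk_nonneg zero_le_power)
    also have "\<dots> \<le> q ^ (n - Suc i) * q ^ i"
      by (intro mult_mono power_mono assms nk_nonneg zero_le_power q0)
    also have "\<dots> = q ^ (n-1)" by (simp only: power_add[symmetric] ni)
    finally show "nk K (y^(n - Suc i) * x^i) \<le> q^(n-1)" .
  qed
  also have "\<dots> = real n * q^(n-1)" by simp
  finally have s: "nk K (\<Sum>i<n. y^(n - Suc i) * x^i) \<le> real n * q^(n-1)" .
  show ?thesis unfolding e
    by (rule order_trans[OF nk_mult]) (intro mult_left_mono s nk_nonneg)
qed

context zp
begin

definition tt :: "nat \<Rightarrow> nat \<Rightarrow> real fps" where
  "tt M m = (if m < M then fps_const (f m - f (Suc m)) * S m else fps_const (f M) * S M)"
definition Bl :: "nat \<Rightarrow> nat \<Rightarrow> real fps" where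
  "Bl M m = (\<Sum>i\<in>{1..<m}. tt M i)"
definition beta :: "nat \<Rightarrow> real" where
  "beta m = (\<Sum>i\<in>{1..<m}. real i * (f i - f (Suc i)))"

lemma Bl_full: "1 \<le> M \<Longrightarrow> Bl M (Suc M) = (\<Sum>i\<in>{1..M}. fps_const (f i) * fps_X ^ i)"
proof -
  assume M: "1 \<le> M"
  have "Bl M (Suc M) = (\<Sum>i\<in>{1..<M}. tt M i) + tt M M"
    unfolding Bl_def using M by (simp add: sum.atLeastLessThan_Suc)
  also have "(\<Sum>i\<in>{1..<M}. tt M i) = (\<Sum>i\<in>{1..<M}. fps_const (f i - f (Suc i)) * S i)"
    by (intro sum.cong) (auto simp: tt_def)
  also have "tt M M = fps_const (f M) * S M" by (simp add: tt_def)
  finally show ?thesis using S_identity[OF M, of f] by simp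
qed

lemma f0: "f 0 = 0" by (simp add: f_def)

lemma FF_trunc: "1 \<le> M \<Longrightarrow> k \<le> M \<Longrightarrow> fps_nth FF k = fps_nth (Bl M (Suc M)) k"
proof -
  assume M: "1 \<le> M" and k: "k \<le> M"
  have "fps_nth (Bl M (Suc M)) k = f k" unfolding Bl_full[OF M] by (rule coeff_poly[of k M f, OF k f0])
  then show ?thesis by (simp add: FF_nth)
qed

lemma Bl_Suc: "1 \<le> m \<Longrightarrow> Bl M (Suc m) = Bl M m + tt M m"
  by (simp add: Bl_def sum.atLeastLessThan_Suc)

lemma Bl_1: "Bl M 1 = 0" by (simp add: Bl_def)
lemma Bl_1': "Bl M (Suc 0) = 0" by (simp add: Bl_def)

lemma f_mono: "1 \<le> m \<Longrightarrow> f (Suc m) \<le> f m"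
proof -
  assume m: "1 \<le> m"
  have "real (Suc m) powr (-1-\<alpha>) \<le> real m powr (-1-\<alpha>)"
    using m a0 by (intro powr_mono2') auto
  then show ?thesis using m c_pos by (simp add: f_def)
qed

lemma a_nonneg: "1 \<le> m \<Longrightarrow> 0 \<le> f m - f (Suc m)" using f_mono by simp

lemma nk_tt_D: "m < M \<Longrightarrow> 1 \<le> m \<Longrightarrow> nk K ((1 - fps_X) * tt M m) \<le> 2 * (f m - f (Suc m))"
proof -
  assume m: "m < M" "1 \<le> m"
  have e: "(1 - fps_X) * tt M m = fps_const (f m - f (Suc m)) * ((1 - fps_X) * S m)"
    using m by (simp add: tt_def mult.left_commute)
  have "nk K ((1 - fps_X) * tt M m) = \<bar>f m - f (Suc m)\<bar> * nk K ((1 - fps_X) * S m)"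
    unfolding e by (rule nk_const_mult)
  also have "\<dots> \<le> \<bar>f m - f (Suc m)\<bar> * 2" by (intro mult_left_mono nk_DS) simp
  also have "\<bar>f m - f (Suc m)\<bar> = f m - f (Suc m)" using a_nonneg[OF m(2)] by simp
  finally show ?thesis by simp
qed

lemma nk_tt_D_last: "nk K ((1 - fps_X) * tt M M) \<le> 2 * f M"
proof -
  have e: "(1 - fps_X) * tt M M = fps_const (f M) * ((1 - fps_X) * S M)"
    by (simp add: tt_def mult.left_commute)
  have "nk K ((1 - fps_X) * tt M M) = \<bar>f M\<bar> * nk K ((1 - fps_X) * S M)"
    unfolding e by (rule nk_const_mult)
  also have "\<dots> \<le> \<bar>f M\<bar> * 2" by (intro mult_left_mono nk_DS) simp
  also have "\<bar>f M\<bar> = f M" using f_nonneg[of M] by simp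
  finally show ?thesis by simp
qed

lemma nk_tt: "m < M \<Longrightarrow> 1 \<le> m \<Longrightarrow> nk K (tt M m) \<le> real m * (f m - f (Suc m))"
proof -
  assume m: "m < M" "1 \<le> m"
  have "nk K (tt M m) = (f m - f (Suc m)) * nk K (S m)"
    using m a_nonneg[OF m(2)] by (simp add: tt_def nk_const_mult)
  also have "\<dots> \<le> (f m - f (Suc m)) * real m" using a_nonneg[OF m(2)] nk_S by (intro mult_left_mono) auto
  finally show ?thesis by (simp add: algebra_simps)
qed

lemma nk_tt_last: "nk K (tt M M) \<le> real M * f M"
proof -
  have "nk K (tt M M) = f M * nk K (S M)"
    using f_nonneg[of M] by (simp add: tt_def nk_const_mult)
  also have "\<dots> \<le> f M * real M" using f_nonneg[of M] nk_S by (intro mult_left_mono) auto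
  finally show ?thesis by (simp add: algebra_simps)
qed

lemma beta_abel: "beta (Suc m) = (\<Sum>i\<in>{1..m}. f i) - real m * f (Suc m)"
proof (induction m)
  case 0 then show ?case by (simp add: beta_def)
next
  case (Suc m)
  have "beta (Suc (Suc m)) = beta (Suc m) + real (Suc m) * (f (Suc m) - f (Suc (Suc m)))"
    unfolding beta_def by (simp add: sum.atLeastLessThan_Suc)
  also have "\<dots> = (\<Sum>i\<in>{1..m}. f i) - real m * f (Suc m) + real (Suc m) * (f (Suc m) - f (Suc (Suc m)))"
    unfolding Suc.IH ..
  also have "\<dots> = (\<Sum>i\<in>{1..Suc m}. f i) - real (Suc m) * f (Suc (Suc m))"
    by (simp add: algebra_simps)
  finally show ?case .
qed

lemma beta_mono: "beta m \<le> beta (Suc m)"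
proof (cases "m = 0")
  case True then show ?thesis by (simp add: beta_def)
next
  case False
  then have "1 \<le> m" by simp
  then have "beta (Suc m) = beta m + real m * (f m - f (Suc m))"
    unfolding beta_def by (simp add: sum.atLeastLessThan_Suc)
  moreover have "0 \<le> real m * (f m - f (Suc m))" using a_nonneg[OF \<open>1 \<le> m\<close>] by simp
  ultimately show ?thesis by simp
qed

lemma beta_nonneg: "0 \<le> beta m"
  unfolding beta_def by (intro sum_nonneg) (auto intro!: mult_nonneg_nonneg a_nonneg)

lemma beta_le: "beta (Suc m) \<le> 1 - real m * f (Suc m)"
  using beta_abel[of m] partial[of m] by simp

lemma beta_le1: "beta m \<le> 1"
proof (cases m)
  case 0 then show ?thesis by (simp add: beta_def)
next
  case (Suc m')
  have "0 \<le> real m' * f (Suc m')" using f_nonneg[of "Suc m'"] by simp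
  then show ?thesis using beta_le[of m'] Suc by simp
qed

lemma nk_Bl: "m \<le> M \<Longrightarrow> nk K (Bl M m) \<le> beta m"
proof -
  assume m: "m \<le> M"
  have "nk K (Bl M m) \<le> (\<Sum>i\<in>{1..<m}. nk K (tt M i))" unfolding Bl_def by (rule nk_sum)
  also have "\<dots> \<le> (\<Sum>i\<in>{1..<m}. real i * (f i - f (Suc i)))"
    by (intro sum_mono nk_tt) (use m in auto)
  finally show ?thesis unfolding beta_def .
qed

lemma nk_Bl_full: "1 \<le> M \<Longrightarrow> nk K (Bl M (Suc M)) \<le> 1"
proof -
  assume M: "1 \<le> M"
  have "nk K (Bl M (Suc M)) = nk K (Bl M M + tt M M)" using Bl_Suc[OF M] by simp
  also have "\<dots> \<le> nk K (Bl M M) + nk K (tt M M)" by (rule nk_add)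
  also have "\<dots> \<le> beta M + real M * f M" by (intro add_mono nk_Bl nk_tt_last) simp
  also have "\<dots> \<le> 1"
  proof -
    obtain M' where M': "M = Suc M'" using M by (cases M) auto
    have "beta M + real M * f M = (\<Sum>i\<in>{1..M'}. f i) + f (Suc M')"
      unfolding M' beta_abel by (simp add: algebra_simps)
    also have "\<dots> = (\<Sum>i\<in>{1..Suc M'}. f i)" by simp
    also have "\<dots> \<le> 1" by (rule partial)
    finally show ?thesis .
  qed
  finally show ?thesis .
qed

lemma V_raw:
  assumes n: "1 \<le> n" and M: "1 \<le> M" and KM: "K \<le> M"
  shows "nk K ((1 - fps_X) * FF^n) \<le> (\<Sum>m\<in>{1..<M}. 2 * (f m - f (Suc m)) * (real n * beta (Suc m) ^ (n-1))) + 2 * f M * real n"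
proof -
  have t1: "\<And>k. k \<le> K \<Longrightarrow> fps_nth FF k = fps_nth (Bl M (Suc M)) k" using FF_trunc M KM by simp
  have t2: "\<And>k. k \<le> K \<Longrightarrow> fps_nth (FF^n) k = fps_nth (Bl M (Suc M) ^ n) k" by (rule cong_pow[OF t1])
  have t3: "\<And>k. k \<le> K \<Longrightarrow> fps_nth ((1 - fps_X) * FF^n) k = fps_nth ((1-fps_X) * Bl M (Suc M)^n) k"
    by (rule cong_mult'[OF t2])
  have tel: "Bl M (Suc M) ^ n = (\<Sum>m\<in>{1..M}. Bl M (Suc m) ^ n - Bl M m ^ n)"
    using sum_Suc_diff[of 1 M "\<lambda>m. Bl M m ^ n"] M n by (simp add: Bl_1')
  have split: "{1..M} = insert M {1..<M}" using M by auto
  have "nk K ((1 - fps_X) * FF^n) = nk K ((1 - fps_X) * Bl M (Suc M) ^ n)"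
    by (rule nk_cong[OF t3])
  also have "\<dots> = nk K (\<Sum>m\<in>{1..M}. (1 - fps_X) * (Bl M (Suc m) ^ n - Bl M m ^ n))"
    by (simp only: tel sum_distrib_left)
  also have "\<dots> \<le> (\<Sum>m\<in>{1..M}. nk K ((1 - fps_X) * (Bl M (Suc m) ^ n - Bl M m ^ n)))" by (rule nk_sum)
  also have "\<dots> = nk K ((1 - fps_X) * (Bl M (Suc M) ^ n - Bl M M ^ n)) + (\<Sum>m\<in>{1..<M}. nk K ((1 - fps_X) * (Bl M (Suc m) ^ n - Bl M m ^ n)))"
    unfolding split by simp
  also have "\<dots> \<le> 2 * f M * real n + (\<Sum>m\<in>{1..<M}. 2 * (f m - f (Suc m)) * (real n * beta (Suc m) ^ (n-1)))"
  proof (intro add_mono sum_mono)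
    have "nk K ((1 - fps_X) * (Bl M (Suc M) ^ n - Bl M M ^ n)) \<le> nk K ((1 - fps_X) * (Bl M (Suc M) - Bl M M)) * (real n * 1^(n-1))"
    proof (rule nk_powdiff)
      show "nk K (Bl M (Suc M)) \<le> 1" by (rule nk_Bl_full[OF M])
      have "nk K (Bl M M) \<le> beta M" by (rule nk_Bl) simp
      then show "nk K (Bl M M) \<le> 1" using beta_le1[of M] by linarith
    qed
    also have "Bl M (Suc M) - Bl M M = tt M M" using Bl_Suc[OF M] by simp
    also have "nk K ((1 - fps_X) * tt M M) * (real n * 1^(n-1)) \<le> 2 * f M * real n"
      using mult_right_mono[OF nk_tt_D_last[of K M], of "real n"] by simp
    finally show "nk K ((1 - fps_X) * (Bl M (Suc M) ^ n - Bl M M ^ n)) \<le> 2 * f M * real n" .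
  next
    fix m assume "m \<in> {1..<M}"
    then have m: "1 \<le> m" "m < M" by auto
    have "nk K ((1 - fps_X) * (Bl M (Suc m) ^ n - Bl M m ^ n)) \<le> nk K ((1 - fps_X) * (Bl M (Suc m) - Bl M m)) * (real n * beta (Suc m)^(n-1))"
    proof (rule nk_powdiff)
      show "nk K (Bl M (Suc m)) \<le> beta (Suc m)" by (rule nk_Bl) (use m in simp)
      have "nk K (Bl M m) \<le> beta m" by (rule nk_Bl) (use m in simp)
      then show "nk K (Bl M m) \<le> beta (Suc m)" using beta_mono[of m] by linarith
    qed
    also have "Bl M (Suc m) - Bl M m = tt M m" using Bl_Suc[OF m(1)] by simp
    also have "nk K ((1 - fps_X) * tt M m) * (real n * beta (Suc m)^(n-1)) \<le> 2 * (f m - f (Suc m)) * (real n * beta (Suc m)^(n-1))"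
      using nk_tt_D[OF m(2) m(1)] beta_nonneg by (intro mult_right_mono) auto
    finally show "nk K ((1 - fps_X) * (Bl M (Suc m) ^ n - Bl M m ^ n)) \<le> 2 * (f m - f (Suc m)) * (real n * beta (Suc m) ^ (n-1))" .
  qed
  finally show ?thesis by simp
qed

end

lemma pow_exp:
  fixes b x :: real
  assumes "0 \<le> b" "b \<le> 1 - x"
  shows "b ^ k \<le> exp (- (real k * x))"
proof -
  have "1 - x \<le> exp (-x)" using exp_ge_add_one_self[of "-x"] by simp
  then have "b \<le> exp (-x)" using assms by linarith
  then have "b ^ k \<le> exp (-x) ^ k" using assms by (intro power_mono) auto
  also have "\<dots> = exp (real k * (-x))" by (rule exp_of_nat_mult[symmetric])
  finally show ?thesis by simp
qed

context zp
begin

definition kap :: real where "kap = c * 2 powr (-1-\<alpha>)"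
definition pp :: real where "pp = (2+\<alpha>)/\<alpha>"
definition AA :: real where "AA = 2 * c * (1+\<alpha>) * (2*pp/kap) powr pp"
definition C1 :: real where "C1 = AA + 2 * c * 2 powr (1+\<alpha>) + 2 * c"

lemma kap_pos: "0 < kap" using c_pos by (simp add: kap_def)
lemma pp_pos: "0 < pp" using a0 by (simp add: pp_def)
lemma AA_nonneg: "0 \<le> AA" using c_pos a0 by (simp add: AA_def)

lemma a_le: "1 \<le> m \<Longrightarrow> f m - f (Suc m) \<le> c * (1+\<alpha>) * real m powr (-2-\<alpha>)"
proof -
  assume m: "1 \<le> m"
  have e1: "-(1+\<alpha>) = -1-\<alpha>" by simp
  have e2: "-(1+\<alpha>) - 1 = -2-\<alpha>" by simp
  have e3: "real m + 1 = real (Suc m)" by simp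
  have d: "real m powr (-1-\<alpha>) - real (Suc m) powr (-1-\<alpha>) \<le> (1+\<alpha>) * real m powr (-2-\<alpha>)"
    using diff_powr_le[of "real m" "1+\<alpha>"] m a0 unfolding e1 e2 e3 by simp
  have "f m - f (Suc m) = c * (real m powr (-1-\<alpha>) - real (Suc m) powr (-1-\<alpha>))"
    using m by (simp add: f_def right_diff_distrib)
  also have "\<dots> \<le> c * ((1+\<alpha>) * real m powr (-2-\<alpha>))" using d c_pos by (intro mult_left_mono) auto
  finally show ?thesis by (simp add: mult.assoc)
qed

lemma mf_ge: "1 \<le> m \<Longrightarrow> kap * real m powr (-\<alpha>) \<le> real m * f (Suc m)"
proof -
  assume m: "1 \<le> m"
  have "real (Suc m) \<le> 2 * real m" using m by simp
  then have "(2 * real m) powr (-1-\<alpha>) \<le> real (Suc m) powr (-1-\<alpha>)"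
    using a0 by (intro powr_mono2') auto
  also have "(2 * real m) powr (-1-\<alpha>) = 2 powr (-1-\<alpha>) * real m powr (-1-\<alpha>)" by (rule powr_mult)
  finally have h: "2 powr (-1-\<alpha>) * real m powr (-1-\<alpha>) \<le> real (Suc m) powr (-1-\<alpha>)" .
  have mm: "real m * real m powr (-1-\<alpha>) = real m powr (-\<alpha>)"
    using powr_mult_base[of "real m" "-1-\<alpha>"] by simp
  have "kap * real m powr (-\<alpha>) = c * (real m * (2 powr (-1-\<alpha>) * real m powr (-1-\<alpha>)))"
    unfolding kap_def mm[symmetric] by (simp add: algebra_simps)
  also have "\<dots> \<le> c * (real m * real (Suc m) powr (-1-\<alpha>))"
    using h c_pos by (intro mult_left_mono) auto
  also have "\<dots> = real m * f (Suc m)" by (simp add: f_def)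
  finally show ?thesis .
qed

lemma beta_exp:
  assumes n: "2 \<le> n" and m: "1 \<le> m"
  shows "beta (Suc m) ^ (n-1) \<le> exp (- (real n / 2 * (kap * real m powr (-\<alpha>))))"
proof -
  have "beta (Suc m) \<le> 1 - kap * real m powr (-\<alpha>)" using beta_le[of m] mf_ge[OF m] by linarith
  then have "beta (Suc m) ^ (n-1) \<le> exp (- (real (n-1) * (kap * real m powr (-\<alpha>))))"
    by (intro pow_exp beta_nonneg)
  also have "\<dots> \<le> exp (- (real n / 2 * (kap * real m powr (-\<alpha>))))"
  proof -
    have "real n / 2 \<le> real (n-1)" using n by (simp add: of_nat_diff)
    moreover have "0 \<le> kap * real m powr (-\<alpha>)" using kap_pos by simp
    ultimately have "real n / 2 * (kap * real m powr (-\<alpha>)) \<le> real (n-1) * (kap * real m powr (-\<alpha>))"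
      by (intro mult_right_mono) auto
    then show ?thesis by simp
  qed
  finally show ?thesis .
qed

lemma term_small:
  assumes n: "2 \<le> n" and m: "1 \<le> m"
  shows "2 * (f m - f (Suc m)) * (real n * beta (Suc m) ^ (n-1)) \<le> AA * real n powr (1 - pp)"
proof -
  define x where "x = kap * real m powr (-\<alpha>)"
  define y where "y = real n / 2 * x"
  have mpos: "0 < real m" using m by simp
  have x_pos: "0 < x" unfolding x_def using kap_pos mpos by simp
  have y_pos: "0 < y" unfolding y_def using x_pos n by simp
  have "2 * (f m - f (Suc m)) * (real n * beta (Suc m) ^ (n-1))
      \<le> 2 * (c * (1+\<alpha>) * real m powr (-2-\<alpha>)) * (real n * exp (-y))"
    using a_le[OF m] beta_exp[OF n m] a_nonneg[OF m] beta_nonneg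
    unfolding y_def x_def by (intro mult_mono) (auto intro!: mult_left_mono)
  also have "\<dots> \<le> 2 * (c * (1+\<alpha>) * real m powr (-2-\<alpha>)) * (real n * (pp / y) powr pp)"
    using exp_le_powr[OF y_pos pp_pos] c_pos a0 by (intro mult_left_mono) auto
  also have "(pp / y) powr pp = (2 * pp / kap) powr pp * real n powr (-pp) * real m powr (2+\<alpha>)"
  proof -
    have e: "pp / y = (2 * pp / kap) * (1 / real n) * real m powr \<alpha>"
      unfolding y_def x_def using kap_pos n mpos
      by (simp add: powr_minus_divide field_simps)
    have "(pp / y) powr pp = (2 * pp / kap) powr pp * (1 / real n) powr pp * (real m powr \<alpha>) powr pp"
      by (simp only: e powr_mult)
    also have "(1 / real n) powr pp = real n powr (-pp)" by (simp add: powr_divide powr_minus_divide)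
    also have "(real m powr \<alpha>) powr pp = real m powr (2+\<alpha>)"
      unfolding powr_powr using a0 by (simp add: pp_def)
    finally show ?thesis .
  qed
  also have "2 * (c * (1+\<alpha>) * real m powr (-2-\<alpha>)) * (real n * ((2 * pp / kap) powr pp * real n powr (-pp) * real m powr (2+\<alpha>)))
      = AA * (real m powr (-2-\<alpha>) * real m powr (2+\<alpha>)) * (real n * real n powr (-pp))"
    unfolding AA_def by (simp add: algebra_simps)
  also have "real m powr (-2-\<alpha>) * real m powr (2+\<alpha>) = 1"
    using mpos by (simp add: powr_add[symmetric])
  also have "real n * real n powr (-pp) = real n powr (1 - pp)"
    using powr_mult_base[of "real n" "-pp"] by simp
  finally show ?thesis by simp
qed

end

context zp
begin

lemma V_bound:
  assumes n: "2 \<le> n"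
  shows "nk K ((1 - fps_X) * FF^n) \<le> C1 / real n powr (1/\<alpha>)"
proof -
  define L where "L = real n powr (1/\<alpha>)"
  define N where "N = nat \<lfloor>L\<rfloor>"
  define M where "M = max K (Suc N)"
  define \<phi> where "\<phi> m = 2 * (f m - f (Suc m)) * (real n * beta (Suc m) ^ (n-1))" for m
  have L1: "1 \<le> L" unfolding L_def using n a0 by (intro ge_one_powr_ge_zero) auto
  have Lpos: "0 < L" using L1 by simp
  have LA: "L powr \<alpha> = real n" unfolding L_def powr_powr using a0 by simp
  have Lp: "L powr (1+\<alpha>) = L * real n" unfolding powr_add LA using Lpos by simp
  have fl1: "1 \<le> \<lfloor>L\<rfloor>" using L1 by (simp add: le_floor_iff)
  have NL: "real N \<le> L" unfolding N_def using fl1 by simp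
  have LN: "L < real N + 1" unfolding N_def using fl1 by simp
  have iN: "int N = \<lfloor>L\<rfloor>" unfolding N_def using fl1 by simp
  have N1: "1 \<le> N" using iN fl1 by linarith
  have rN1: "1 \<le> real N" using N1 by simp
  have L2N: "L / 2 \<le> real N" using LN rN1 by linarith
  have NM: "N < M" "K \<le> M" "1 \<le> M" unfolding M_def by auto
  have LM: "L \<le> real M" using LN NM(1) by (simp add: M_def)
  have e4: "-(2+\<alpha>) = -2-\<alpha>" "1 - (2+\<alpha>) = -1-\<alpha>" "(2+\<alpha>) - 1 = 1+\<alpha>" by simp_all
  have raw: "nk K ((1 - fps_X) * FF^n) \<le> (\<Sum>m\<in>{1..<M}. \<phi> m) + 2 * f M * real n"
    unfolding \<phi>_def using V_raw[of n M K] n NM by simp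
  have split: "{1..<M} = {1..N} \<union> {N<..<M}" using NM by auto
  have sum_split: "(\<Sum>m\<in>{1..<M}. \<phi> m) = (\<Sum>m\<in>{1..N}. \<phi> m) + (\<Sum>m\<in>{N<..<M}. \<phi> m)"
    unfolding split by (rule sum.union_disjoint) auto
  have p1: "(\<Sum>m\<in>{1..N}. \<phi> m) \<le> AA / L"
  proof -
    have "(\<Sum>m\<in>{1..N}. \<phi> m) \<le> (\<Sum>m\<in>{1..N}. AA * real n powr (1 - pp))"
      unfolding \<phi>_def by (intro sum_mono term_small[OF n]) auto
    also have "\<dots> = real N * (AA * real n powr (1 - pp))" by simp
    also have "\<dots> \<le> L * (AA * real n powr (1 - pp))"
      using NL AA_nonneg by (intro mult_right_mono) auto
    also have "real n powr (1 - pp) = L powr (-2)"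
    proof -
      have "1 - pp = 1/\<alpha> * (-2)" unfolding pp_def using a0 by (simp add: field_simps)
      then show ?thesis unfolding L_def powr_powr by simp
    qed
    also have "L * (AA * L powr (-2)) = AA * (L * L powr (-2))" by simp
    also have "L * L powr (-2) = 1 / L"
      using powr_mult_base[of L "-2"] Lpos by (simp add: powr_minus_divide)
    finally show ?thesis by simp
  qed
  have p2: "(\<Sum>m\<in>{N<..<M}. \<phi> m) \<le> 2 * c * 2 powr (1+\<alpha>) / L"
  proof -
    have "(\<Sum>m\<in>{N<..<M}. \<phi> m) \<le> (\<Sum>m\<in>{N<..<M}. (2*c*(1+\<alpha>)*real n) * real m powr (-2-\<alpha>))"
    proof (intro sum_mono)
      fix m assume "m \<in> {N<..<M}"
      then have m: "1 \<le> m" using N1 by auto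
      have b: "beta (Suc m) ^ (n-1) \<le> 1" using beta_nonneg beta_le1 by (intro power_le_one)
      have "\<phi> m \<le> 2 * (c*(1+\<alpha>)*real m powr (-2-\<alpha>)) * (real n * 1)"
        unfolding \<phi>_def using a_le[OF m] a_nonneg[OF m] b beta_nonneg
        by (intro mult_mono mult_left_mono) auto
      then show "\<phi> m \<le> (2*c*(1+\<alpha>)*real n) * real m powr (-2-\<alpha>)" by (simp add: algebra_simps)
    qed
    also have "\<dots> = (2*c*(1+\<alpha>)*real n) * (\<Sum>m\<in>{N<..<M}. real m powr (-2-\<alpha>))"
      by (simp add: sum_distrib_left)
    also have "\<dots> \<le> (2*c*(1+\<alpha>)*real n) * (real N powr (-1-\<alpha>) / (1+\<alpha>))"
    proof (intro mult_left_mono)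
      have "(\<Sum>m\<in>{N<..<M}. real m powr (-2-\<alpha>)) \<le> (\<Sum>m\<in>{N<..M}. real m powr (-2-\<alpha>))"
        by (rule sum_mono2) auto
      also have "\<dots> \<le> real N powr (-1-\<alpha>) / (1+\<alpha>)"
        using sum_powr_gt1[of "2+\<alpha>" N M] N1 a0 unfolding e4 by simp
      finally show "(\<Sum>m\<in>{N<..<M}. real m powr (-2-\<alpha>)) \<le> real N powr (-1-\<alpha>) / (1+\<alpha>)" .
      show "0 \<le> 2*c*(1+\<alpha>)*real n" using c_pos a0 by simp
    qed
    also have "\<dots> = 2 * c * real n * real N powr (-1-\<alpha>)"
    proof -
      have ap: "1 + \<alpha> \<noteq> 0" using a0 by simp
      then show ?thesis by (simp add: field_simps)
    qed
    also have "\<dots> = 2 * c * (real n / real N powr (1+\<alpha>))" by (simp add: pm)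
    also have "real n / real N powr (1+\<alpha>) \<le> real n / (L/2) powr (1+\<alpha>)"
      using L2N Lpos a0 by (intro divide_left_mono powr_mono2 mult_pos_pos) auto
    also have "real n / (L/2) powr (1+\<alpha>) = 2 powr (1+\<alpha>) / L"
      unfolding powr_divide Lp using Lpos n by (simp add: field_simps)
    finally show ?thesis using c_pos by (simp add: mult_left_mono)
  qed
  have p3: "2 * f M * real n \<le> 2 * c / L"
  proof -
    have "2 * f M * real n = 2 * c * (real n / real M powr (1+\<alpha>))"
      using NM by (simp add: f_def pm)
    also have "real n / real M powr (1+\<alpha>) \<le> real n / L powr (1+\<alpha>)"
      using LM Lpos a0 by (intro divide_left_mono powr_mono2 mult_pos_pos) auto
    also have "real n / L powr (1+\<alpha>) = 1 / L" unfolding Lp using Lpos n by simp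
    finally show ?thesis using c_pos by (simp add: mult_left_mono)
  qed
  have "nk K ((1 - fps_X) * FF^n) \<le> AA / L + 2 * c * 2 powr (1+\<alpha>) / L + 2 * c / L"
    using raw sum_split p1 p2 p3 by linarith
  also have "\<dots> = C1 / L" unfolding C1_def by (simp add: add_divide_distrib)
  finally show ?thesis unfolding L_def .
qed

end

lemma nk_mono: "K \<le> K' \<Longrightarrow> nk K a \<le> nk K' a"
  unfolding nk_def by (rule sum_mono2) auto

lemma const_sum: "(\<Sum>j\<in>A. fps_const (h j)) = fps_const (\<Sum>j\<in>A. h j :: real)"
  by (induction A rule: infinite_finite_induct) auto

context zp
begin

definition B2 :: real where
  "B2 = c * C1 / (1-\<alpha>) + 2 * c * 2 powr \<alpha> / \<alpha> + 2 * c * C1 / \<alpha> + c / \<alpha>"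

lemma nk_FF: "nk K FF \<le> 1"
proof -
  have "nk K FF = (\<Sum>k\<in>insert 0 {1..K}. f k)"
  proof -
    have "{..K} = insert 0 {1..K}" by auto
    then show ?thesis unfolding nk_def FF_nth using f_nonneg by simp
  qed
  also have "\<dots> = (\<Sum>k\<in>{1..K}. f k)" by (simp add: f0)
  also have "\<dots> \<le> 1" by (rule partial)
  finally show ?thesis .
qed

lemma nk_g: "nk K (FF^n) \<le> 1"
  using nk_pow[of K FF n] power_le_one[OF nk_nonneg[of K FF] nk_FF[of K], of n] by linarith

lemma C1_nonneg: "0 \<le> C1"
  unfolding C1_def using AA_nonneg c_pos by simp

lemma E_eq:
  "1 - (\<Sum>j\<in>{1..K}. fps_const (f j) * fps_X ^ j)
   = (\<Sum>j\<in>{1..K}. fps_const (f j) * (1 - fps_X ^ j)) + fps_const (1 - (\<Sum>j\<in>{1..K}. f j))"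
proof -
  have a: "(\<Sum>j\<in>{1..K}. fps_const (f j) * (1 - fps_X ^ j))
      = fps_const (\<Sum>j\<in>{1..K}. f j) - (\<Sum>j\<in>{1..K}. fps_const (f j) * fps_X ^ j)"
    by (simp add: right_diff_distrib sum_subtractf const_sum)
  have b: "fps_const (1 - (\<Sum>j\<in>{1..K}. f j)) = 1 - fps_const (\<Sum>j\<in>{1..K}. f j)"
    by (simp only: fps_const_sub[symmetric] fps_const_1_eq_1)
  show ?thesis unfolding a b by simp
qed

lemma step_A:
  assumes n: "2 \<le> n" and K: "1 \<le> K"
  shows "nk K (FF^n - FF^Suc n) \<le> B2 / real n"
proof -
  define g where "g = FF^n"
  define V where "V = nk K ((1 - fps_X) * g)"
  define L where "L = real n powr (1/\<alpha>)"
  define N where "N = nat \<lfloor>L\<rfloor>"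
  define P where "P = (\<Sum>j\<in>{1..K}. fps_const (f j) * fps_X ^ j)"
  define T where "T = 1 - (\<Sum>j\<in>{1..K}. f j)"
  have L1: "1 \<le> L" unfolding L_def using n a0 by (intro ge_one_powr_ge_zero) auto
  have Lpos: "0 < L" using L1 by simp
  have LA: "L powr \<alpha> = real n" unfolding L_def powr_powr using a0 by simp
  have npos: "0 < real n" using n by simp
  have fl1: "1 \<le> \<lfloor>L\<rfloor>" using L1 by (simp add: le_floor_iff)
  have NL: "real N \<le> L" unfolding N_def using fl1 by simp
  have LN: "L < real N + 1" unfolding N_def using fl1 by simp
  have iN: "int N = \<lfloor>L\<rfloor>" unfolding N_def using fl1 by simp
  have N1: "1 \<le> N" using iN fl1 by linarith
  have rN1: "1 \<le> real N" using N1 by simp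
  have L2N: "L / 2 \<le> real N" using LN rN1 by linarith
  have V0: "0 \<le> V" unfolding V_def by (rule nk_nonneg)
  have hV: "V \<le> C1 / L" unfolding V_def g_def L_def by (rule V_bound[OF n])
  have T0: "0 \<le> T" unfolding T_def by (rule tail_nonneg)
  have Tb: "T \<le> c * real K powr (-\<alpha>) / \<alpha>" unfolding T_def by (rule tail[OF K])
  have ng: "nk K g \<le> 1" unfolding g_def by (rule nk_g)
  have e0: "FF^n - FF^Suc n = (1 - FF) * g" unfolding g_def by (simp add: algebra_simps)
  have cg: "\<And>k. k \<le> K \<Longrightarrow> fps_nth (1 - FF) k = fps_nth (1 - P) k"
  proof -
    fix k assume k: "k \<le> K"
    have "fps_nth P k = f k" unfolding P_def by (rule coeff_poly[of k K f, OF k f0])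
    then show "fps_nth (1 - FF) k = fps_nth (1 - P) k" by (simp add: FF_nth)
  qed
  have "nk K (FF^n - FF^Suc n) = nk K ((1 - P) * g)"
    unfolding e0 by (rule nk_cong, rule cong_mult[OF cg])
  also have "(1 - P) * g = (\<Sum>j\<in>{1..K}. fps_const (f j) * ((1 - fps_X ^ j) * g)) + fps_const T * g"
    unfolding P_def T_def E_eq by (simp add: distrib_right sum_distrib_right mult.assoc)
  also have "nk K \<dots> \<le> (\<Sum>j\<in>{1..K}. f j * nk K ((1 - fps_X ^ j) * g)) + T * nk K g"
  proof -
    have "nk K ((\<Sum>j\<in>{1..K}. fps_const (f j) * ((1 - fps_X ^ j) * g)) + fps_const T * g)
        \<le> nk K (\<Sum>j\<in>{1..K}. fps_const (f j) * ((1 - fps_X ^ j) * g)) + nk K (fps_const T * g)"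
      by (rule nk_add)
    also have "nk K (\<Sum>j\<in>{1..K}. fps_const (f j) * ((1 - fps_X ^ j) * g))
        \<le> (\<Sum>j\<in>{1..K}. nk K (fps_const (f j) * ((1 - fps_X ^ j) * g)))" by (rule nk_sum)
    also have "\<dots> = (\<Sum>j\<in>{1..K}. f j * nk K ((1 - fps_X ^ j) * g))"
      by (intro sum.cong refl) (simp add: nk_const_mult f_nonneg)
    also have "nk K (fps_const T * g) = T * nk K g" using T0 by (simp add: nk_const_mult)
    finally show ?thesis by simp
  qed
  finally have main: "nk K (FF^n - FF^Suc n) \<le> (\<Sum>j\<in>{1..K}. f j * nk K ((1 - fps_X ^ j) * g)) + T * nk K g" .
  have bj1: "nk K ((1 - fps_X ^ j) * g) \<le> real j * V" for j
  proof -
    have "(1 - fps_X ^ j) * g = (\<Sum>i<j. (fps_X::real fps) ^ i) * ((1 - fps_X) * g)"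
      unfolding geom_fps[symmetric] by (simp only: mult.assoc)
    then have "nk K ((1 - fps_X ^ j) * g) \<le> nk K (\<Sum>i<j. (fps_X::real fps) ^ i) * V"
      unfolding V_def using nk_mult by metis
    also have "\<dots> \<le> real j * V" using V0 nk_geom by (intro mult_right_mono) auto
    finally show ?thesis .
  qed
  have bj2: "nk K ((1 - fps_X ^ j) * g) \<le> 2" for j
  proof -
    have "nk K ((1 - fps_X ^ j) * g) \<le> nk K (1 - fps_X ^ j) * nk K g" by (rule nk_mult)
    also have "\<dots> \<le> 2 * 1"
    proof (intro mult_mono ng nk_nonneg)
      have "nk K (1 - fps_X ^ j) \<le> nk K 1 + nk K (fps_X ^ j)" by (rule nk_diff)
      then show "nk K (1 - fps_X ^ j) \<le> 2" using nk_one nk_X_pow[of K j] by simp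
    qed simp
    finally show ?thesis by simp
  qed
  have ngV: "nk K g \<le> real (Suc K) * V"
  proof -
    have "g = (1 - fps_X ^ Suc K) * g + fps_X ^ Suc K * g" by (simp add: algebra_simps)
    then have "nk K g \<le> nk K ((1 - fps_X ^ Suc K) * g) + nk K (fps_X ^ Suc K * g)"
      using nk_add by metis
    also have "nk K (fps_X ^ Suc K * g) = 0" by (rule nk_high)
    finally show ?thesis using bj1[of "Suc K"] by simp
  qed
  have powL: "L powr (1-\<alpha>) = L / real n" unfolding powr_diff LA using Lpos by simp
  have sumb: "(\<Sum>j\<in>{1..K}. f j * nk K ((1 - fps_X ^ j) * g)) \<le> (c * C1 / (1-\<alpha>) + 2 * c * 2 powr \<alpha> / \<alpha>) / real n"
  proof -
    define \<psi> where "\<psi> j = f j * nk K ((1 - fps_X ^ j) * g)" for j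
    have \<psi>0: "0 \<le> \<psi> j" for j unfolding \<psi>_def using f_nonneg nk_nonneg by simp
    have "(\<Sum>j\<in>{1..K}. \<psi> j) \<le> (\<Sum>j\<in>{1..N} \<union> {N<..K}. \<psi> j)"
      by (rule sum_mono2) (auto simp: \<psi>0)
    also have "\<dots> = (\<Sum>j\<in>{1..N}. \<psi> j) + (\<Sum>j\<in>{N<..K}. \<psi> j)"
      by (rule sum.union_disjoint) auto
    also have "(\<Sum>j\<in>{1..N}. \<psi> j) \<le> c * C1 / (1-\<alpha>) / real n"
    proof -
      have "(\<Sum>j\<in>{1..N}. \<psi> j) \<le> (\<Sum>j\<in>{1..N}. (c * V) * real j powr (-\<alpha>))"
      proof (intro sum_mono)
        fix j assume "j \<in> {1..N}"
        then have j: "1 \<le> j" by simp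
        have jj: "real j powr (-1-\<alpha>) * real j = real j powr (-\<alpha>)"
          using powr_mult_base[of "real j" "-1-\<alpha>"] by (simp add: mult.commute)
        have "\<psi> j \<le> f j * (real j * V)" unfolding \<psi>_def using bj1 f_nonneg by (intro mult_left_mono) auto
        also have "\<dots> = (c * V) * (real j powr (-1-\<alpha>) * real j)" using j by (simp add: f_def)
        finally show "\<psi> j \<le> (c * V) * real j powr (-\<alpha>)" unfolding jj .
      qed
      also have "\<dots> = (c * V) * (\<Sum>j\<in>{1..N}. real j powr (-\<alpha>))" by (simp add: sum_distrib_left)
      also have "\<dots> \<le> (c * V) * (real N powr (1-\<alpha>) / (1-\<alpha>))"
        using sum_powr_lt1[OF a0 a1, of N] c_pos V0 by (intro mult_left_mono) auto
      also have "\<dots> \<le> (c * (C1 / L)) * (L powr (1-\<alpha>) / (1-\<alpha>))"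
      proof (intro mult_mono mult_left_mono divide_right_mono powr_mono2)
        show "V \<le> C1 / L" by (rule hV)
      qed (use c_pos V0 a1 NL a0 C1_nonneg Lpos in auto)
      also have "\<dots> = c * C1 / (1-\<alpha>) / real n" unfolding powL using Lpos npos by simp
      finally show ?thesis .
    qed
    also have "(\<Sum>j\<in>{N<..K}. \<psi> j) \<le> 2 * c * 2 powr \<alpha> / \<alpha> / real n"
    proof -
      have "(\<Sum>j\<in>{N<..K}. \<psi> j) \<le> (\<Sum>j\<in>{N<..K}. (2 * c) * real j powr (-(1+\<alpha>)))"
      proof (intro sum_mono)
        fix j assume "j \<in> {N<..K}"
        then have j: "1 \<le> j" using N1 by simp
        have "\<psi> j \<le> f j * 2" unfolding \<psi>_def using bj2 f_nonneg by (intro mult_left_mono) auto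
        also have "\<dots> = (2 * c) * real j powr (-(1+\<alpha>))" using j by (simp add: f_def)
        finally show "\<psi> j \<le> (2 * c) * real j powr (-(1+\<alpha>))" .
      qed
      also have "\<dots> = (2 * c) * (\<Sum>j\<in>{N<..K}. real j powr (-(1+\<alpha>)))" by (simp add: sum_distrib_left)
      also have "\<dots> \<le> (2 * c) * (real N powr (1 - (1+\<alpha>)) / ((1+\<alpha>) - 1))"
        using sum_powr_gt1[of "1+\<alpha>" N K] a0 N1 c_pos by (intro mult_left_mono) auto
      also have "real N powr (1 - (1+\<alpha>)) / ((1+\<alpha>) - 1) = (1 / real N powr \<alpha>) / \<alpha>"
        by (simp add: powr_minus_divide)
      also have "1 / real N powr \<alpha> \<le> 1 / (L/2) powr \<alpha>"
        using L2N Lpos a0 by (intro divide_left_mono powr_mono2 mult_pos_pos) auto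
      also have "1 / (L/2) powr \<alpha> = 2 powr \<alpha> / real n" unfolding powr_divide LA by simp
      finally show ?thesis using c_pos a0 by (simp add: divide_right_mono mult_left_mono mult.commute)
    qed
    finally show ?thesis unfolding \<psi>_def by (simp add: add_divide_distrib)
  qed
  have tailb: "T * nk K g \<le> (2 * c * C1 / \<alpha> + c / \<alpha>) / real n"
  proof (cases "real K \<le> L")
    case True
    have "T * nk K g \<le> (c * real K powr (-\<alpha>) / \<alpha>) * (real (Suc K) * (C1 / L))"
      using Tb ngV hV T0 V0 nk_nonneg by (intro mult_mono order_trans[OF ngV] mult_left_mono) auto
    also have "\<dots> \<le> (c * real K powr (-\<alpha>) / \<alpha>) * ((2 * real K) * (C1 / L))"
    proof (intro mult_left_mono mult_right_mono)
      show "real (Suc K) \<le> 2 * real K" using K by simp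
      show "0 \<le> C1 / L" using hV V0 by linarith
    qed (use c_pos a0 in auto)
    also have "\<dots> = (2 * c * C1 / \<alpha>) * (real K powr (-\<alpha>) * real K) / L" by (simp add: field_simps)
    also have "real K powr (-\<alpha>) * real K = real K powr (1-\<alpha>)"
      using powr_mult_base[of "real K" "-\<alpha>"] by (simp add: mult.commute)
    also have "(2 * c * C1 / \<alpha>) * real K powr (1-\<alpha>) / L \<le> (2 * c * C1 / \<alpha>) * L powr (1-\<alpha>) / L"
    proof (intro divide_right_mono mult_left_mono powr_mono2)
      show "0 \<le> 2 * c * C1 / \<alpha>" using c_pos a0 C1_nonneg by (simp add: zero_le_divide_iff)
    qed (use True a1 Lpos in auto)
    also have "\<dots> = 2 * c * C1 / \<alpha> / real n" unfolding powL using Lpos npos by simp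
    finally have "T * nk K g \<le> 2 * c * C1 / \<alpha> / real n" .
    moreover have "0 \<le> c / \<alpha> / real n" using c_pos a0 by simp
    ultimately show ?thesis by (simp add: add_divide_distrib)
  next
    case False
    have "T * nk K g \<le> T * 1" using ng T0 by (intro mult_left_mono) auto
    also have "\<dots> \<le> c * real K powr (-\<alpha>) / \<alpha>" using Tb by simp
    also have "real K powr (-\<alpha>) = 1 / real K powr \<alpha>" by (rule powr_minus_divide)
    also have "1 / real K powr \<alpha> \<le> 1 / L powr \<alpha>"
      using False Lpos a0 by (intro divide_left_mono powr_mono2 mult_pos_pos) auto
    finally have "T * nk K g \<le> c * (1 / L powr \<alpha>) / \<alpha>" using c_pos a0 by (simp add: divide_right_mono mult_left_mono)
    also have "\<dots> = c / \<alpha> / real n" unfolding LA by simp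
    finally have "T * nk K g \<le> c / \<alpha> / real n" .
    moreover have "0 \<le> 2 * c * C1 / \<alpha> / real n" using c_pos a0 C1_nonneg by (simp add: zero_le_divide_iff)
    ultimately show ?thesis by (simp add: add_divide_distrib)
  qed
  have "nk K (FF^n - FF^Suc n) \<le> (c * C1 / (1-\<alpha>) + 2 * c * 2 powr \<alpha> / \<alpha>) / real n + (2 * c * C1 / \<alpha> + c / \<alpha>) / real n"
    using main sumb tailb by linarith
  also have "\<dots> = B2 / real n" unfolding B2_def by (simp add: add_divide_distrib)
  finally show ?thesis .
qed

end

context zp
begin

lemma all_bound:
  assumes n: "1 \<le> n"
  shows "nk K (FF^n - FF^Suc n) \<le> max 2 B2 / real n"
proof (cases "n = 1")
  case True
  have "nk K (FF^n - FF^Suc n) \<le> nk K (FF^n) + nk K (FF^Suc n)" by (rule nk_diff)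
  also have "\<dots> \<le> 1 + 1" by (intro add_mono nk_g)
  finally show ?thesis using True by simp
next
  case False
  then have n2: "2 \<le> n" using n by simp
  have "nk K (FF^n - FF^Suc n) \<le> nk (max 1 K) (FF^n - FF^Suc n)" by (rule nk_mono) simp
  also have "\<dots> \<le> B2 / real n" by (rule step_A[OF n2]) simp
  also have "\<dots> \<le> max 2 B2 / real n" using n2 by (intro divide_right_mono) auto
  finally show ?thesis .
qed

lemma infsum_bound:
  assumes B: "\<And>K. nk K (FF^n - FF^Suc n) \<le> B" and B0: "0 \<le> B"
  shows "infsum (\<lambda>k. \<bar>conv_pow (zeta_prob \<alpha>) n k - conv_pow (zeta_prob \<alpha>) (Suc n) k\<bar>) UNIV \<le> B"
proof -
  define h where "h k = \<bar>conv_pow (zeta_prob \<alpha>) n k - conv_pow (zeta_prob \<alpha>) (Suc n) k\<bar>" for k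
  have hneg: "h k = 0" if "k < 0" for k unfolding h_def by (simp only: link_neg[OF that])
  have hnat: "h (int m) = \<bar>fps_nth (FF^n - FF^Suc n) m\<bar>" for m unfolding h_def link_nat by simp
  show ?thesis
  proof (cases "h summable_on UNIV")
    case True
    have "infsum h UNIV \<le> B"
    proof (rule infsum_le_finite_sums[OF True])
      fix S :: "int set" assume S: "finite S" "S \<subseteq> UNIV"
      define K where "K = nat (Max (insert 0 S))"
      have SK: "x \<le> int K" if "x \<in> S" for x
      proof -
        have "x \<le> Max (insert 0 S)" using S that by simp
        moreover have "0 \<le> Max (insert 0 S)" using S by simp
        ultimately show ?thesis unfolding K_def by simp
      qed
      have "sum h S = sum h (S \<inter> {0..int K})"
      proof (rule sum.mono_neutral_right[OF S(1)])
        show "S \<inter> {0..int K} \<subseteq> S" by auto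
        show "\<forall>i\<in>S - S \<inter> {0..int K}. h i = 0"
        proof
          fix i assume "i \<in> S - S \<inter> {0..int K}"
          then have "i < 0" using SK by force
          then show "h i = 0" by (rule hneg)
        qed
      qed
      also have "\<dots> \<le> sum h {0..int K}"
        by (rule sum_mono2) (auto simp: h_def)
      also have "\<dots> = sum h (int ` {0..K})" by (simp add: image_int_atLeastAtMost)
      also have "\<dots> = (\<Sum>m\<in>{0..K}. h (int m))" by (simp add: sum.reindex)
      also have "\<dots> = nk K (FF^n - FF^Suc n)" unfolding nk_def hnat atLeast0AtMost ..
      also have "\<dots> \<le> B" by (rule B)
      finally show "sum h S \<le> B" .
    qed
    then show ?thesis unfolding h_def .
  next
    case False
    then show ?thesis using B0 unfolding h_def[symmetric] by (simp add: infsum_not_exists)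
  qed
qed

lemma bdd: "bdd_above ((\<lambda>n. real n * (\<Sum>\<^sub>\<infinity>k\<in>UNIV. \<bar>conv_pow (zeta_prob \<alpha>) n k - conv_pow (zeta_prob \<alpha>) (Suc n) k\<bar>)) ` {1..})"
proof (rule bdd_aboveI2)
  fix n :: nat assume "n \<in> {1..}"
  then have n: "1 \<le> n" by simp
  have B0: "0 \<le> max 2 B2 / real n" using n by simp
  have "(\<Sum>\<^sub>\<infinity>k\<in>UNIV. \<bar>conv_pow (zeta_prob \<alpha>) n k - conv_pow (zeta_prob \<alpha>) (Suc n) k\<bar>) \<le> max 2 B2 / real n"
    by (rule infsum_bound[OF all_bound[OF n] B0])
  then have "real n * (\<Sum>\<^sub>\<infinity>k\<in>UNIV. \<bar>conv_pow (zeta_prob \<alpha>) n k - conv_pow (zeta_prob \<alpha>) (Suc n) k\<bar>) \<le> real n * (max 2 B2 / real n)"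
    using n by (intro mult_left_mono) auto
  also have "\<dots> = max 2 B2" using n by simp
  finally show "real n * (\<Sum>\<^sub>\<infinity>k\<in>UNIV. \<bar>conv_pow (zeta_prob \<alpha>) n k - conv_pow (zeta_prob \<alpha>) (Suc n) k\<bar>) \<le> max 2 B2" .
qed

lemma F_le1: "zeta_prob \<alpha> k \<le> 1"
proof (cases "k \<le> 0")
  case True then show ?thesis by (simp add: F_nonpos)
next
  case False
  define m where "m = nat k"
  have m: "k = int m" "1 \<le> m" using False unfolding m_def by simp_all
  have "f m \<le> (\<Sum>i\<in>{1..m}. f i)" using m f_nonneg by (intro member_le_sum) auto
  then show ?thesis using partial[of m] m by (simp add: F_nat)
qed

lemma F_nonneg: "0 \<le> zeta_prob \<alpha> k"
proof (cases "k \<le> 0")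
  case True then show ?thesis by (simp add: F_nonpos)
next
  case False
  then have "k = int (nat k)" by simp
  then show ?thesis using f_nonneg[of "nat k"] F_nat[of "nat k"] by metis
qed

lemma F_has_sum: "(zeta_prob \<alpha> has_sum 1) UNIV"
proof -
  have "((\<lambda>n. f (Suc n)) has_sum 1) UNIV"
    by (rule sums_nonneg_imp_has_sum[OF sums1]) (rule f_nonneg)
  then have "((zeta_prob \<alpha> \<circ> (\<lambda>n. int (Suc n))) has_sum 1) UNIV"
    by (simp add: comp_def F_nat del: of_nat_Suc)
  then have h: "(zeta_prob \<alpha> has_sum 1) (range (\<lambda>n. int (Suc n)))"
    by (subst has_sum_reindex) (auto simp: inj_on_def)
  show ?thesis
  proof (rule has_sum_cong_neutral[THEN iffD1, OF _ _ _ h])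
    fix x assume "x \<in> UNIV - range (\<lambda>n. int (Suc n))"
    then have "\<not> (0 < x)"
    proof (intro notI)
      assume "x \<in> UNIV - range (\<lambda>n. int (Suc n))" "0 < x"
      then have "x = int (Suc (nat x - 1))" by simp
      then show False using \<open>x \<in> UNIV - range (\<lambda>n. int (Suc n))\<close> by blast
    qed
    then show "zeta_prob \<alpha> x = 0" by (simp add: F_nonpos)
  qed auto
qed

lemma in_class_A: "zeta_prob \<alpha> \<in> class_A"
  unfolding class_A_def prob_Zplus_def
  using F_nonneg F_le1 F_has_sum F_nonpos bdd by auto

end

theorem theorem5p4:
  fixes \<alpha> :: real
  assumes "0 < \<alpha>" and "\<alpha> < 1"
  shows "zeta_prob \<alpha> \<in> class_A"
proof -
  interpret zp \<alpha> using assms by unfold_locales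
  show ?thesis by (rule in_class_A)
qed

end
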